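(* Every statistically Cauchy sequence in an $S$-metric space $(X,S)$ is statistically bounded.
   Context: An $S$-metric on a nonempty set $X$ is a function $S:X^3\to[0,\infty)$ such that for all $x,y,z,a\in X$: $S(x,y,z)=0$ if and only if $x=y=z$, and $S(x,y,z)\le S(x,x,a)+S(y,y,a)+S(z,z,a)$. For $B\subset\mathbb N$ the natural density is $\delta(B)=\lim_{n\to\infty}\frac{|\{k\in B:k\le n\}|}{n}$ when the limit exists. A sequence $\{x_n\}$ is statistically Cauchy if for every $\varepsilon>0$ there exists $N\in\mathbb N$ with $\delta(\{n: S(x_n,x_n,x_N)\ge\varepsilon\})=0$. A sequence $\{x_n\}$ is statistically bounded if for any fixed $u\in X$ there exists a positive real number $B$ such that $\delta(\{n\in\mathbb N: S(x_n,x_n,u)\ge B\})=0$. *)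

theory Defs
  imports Complex_Main
begin

definition S_metric :: "('a \<Rightarrow> 'a \<Rightarrow> 'a \<Rightarrow> real) \<Rightarrow> bool" where
  "S_metric S \<longleftrightarrow>
     (\<forall>x y z. S x y z \<ge> 0) \<and>
     (\<forall>x y z. S x y z = 0 \<longleftrightarrow> x = y \<and> y = z) \<and>
     (\<forall>x y z a. S x y z \<le> S x x a + S y y a + S z z a)"

definition natural_density :: "nat set \<Rightarrow> real \<Rightarrow> bool" where
  "natural_density B d \<longleftrightarrow>
     (\<lambda>n. real (card {k \<in> B. 1 \<le> k \<and> k \<le> n}) / real n) \<longlonglongrightarrow> d"

definition stat_cauchy :: "('a \<Rightarrow> 'a \<Rightarrow> 'a \<Rightarrow> real) \<Rightarrow> (nat \<Rightarrow> 'a) \<Rightarrow> bool" where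
  "stat_cauchy S x \<longleftrightarrow>
     (\<forall>\<epsilon>>0. \<exists>N. natural_density {n. S (x n) (x n) (x N) \<ge> \<epsilon>} 0)"

definition stat_bounded :: "('a \<Rightarrow> 'a \<Rightarrow> 'a \<Rightarrow> real) \<Rightarrow> (nat \<Rightarrow> 'a) \<Rightarrow> bool" where
  "stat_bounded S x \<longleftrightarrow>
     (\<forall>u. \<exists>B>0. natural_density {n. S (x n) (x n) u \<ge> B} 0)"

end

theory Submission
  imports Defs
begin

lemma density_zero_mono:
  assumes "A \<subseteq> B" "natural_density B 0"
  shows "natural_density A 0"
  unfolding natural_density_def
proof (rule tendsto_sandwich[where f="\<lambda>n. 0" and h="\<lambda>n. real (card {k \<in> B. 1 \<le> k \<and> k \<le> n}) / real n"])
  show "\<forall>\<^sub>F n in sequentially. 0 \<le> real (card {k \<in> A. 1 \<le> k \<and> k \<le> n}) / real n" by simp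
  show "\<forall>\<^sub>F n in sequentially. real (card {k \<in> A. 1 \<le> k \<and> k \<le> n}) / real n
      \<le> real (card {k \<in> B. 1 \<le> k \<and> k \<le> n}) / real n"
  proof (rule always_eventually, intro allI divide_right_mono)
    fix n
    have "card {k \<in> A. 1 \<le> k \<and> k \<le> n} \<le> card {k \<in> B. 1 \<le> k \<and> k \<le> n}"
      by (rule card_mono) (use assms(1) in \<open>auto intro: finite_subset[of _ "{..n}"]\<close>)
    then show "real (card {k \<in> A. 1 \<le> k \<and> k \<le> n}) \<le> real (card {k \<in> B. 1 \<le> k \<and> k \<le> n})" by simp
  qed simp
  show "(\<lambda>n. 0) \<longlonglongrightarrow> (0::real)" by simp
  show "(\<lambda>n. real (card {k \<in> B. 1 \<le> k \<and> k \<le> n}) / real n) \<longlonglongrightarrow> 0"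
    using assms(2) unfolding natural_density_def .
qed

theorem theorem3p7:
  fixes S :: "'a \<Rightarrow> 'a \<Rightarrow> 'a \<Rightarrow> real" and x :: "nat \<Rightarrow> 'a"
  assumes "S_metric S" and "stat_cauchy S x"
  shows "stat_bounded S x"
  unfolding stat_bounded_def
proof
  fix u
  obtain N where N: "natural_density {n. S (x n) (x n) (x N) \<ge> 1} 0"
    using assms(2) unfolding stat_cauchy_def by (meson zero_less_one)
  have nn: "\<And>a b c. S a b c \<ge> 0" and tri: "\<And>a b c d. S a b c \<le> S a a d + S b b d + S c c d"
    using assms(1) unfolding S_metric_def by auto
  define B where "B = 3 + S u u (x N)"
  have "B > 0" using nn[of u u "x N"] unfolding B_def by simp
  moreover have "{n. S (x n) (x n) u \<ge> B} \<subseteq> {n. S (x n) (x n) (x N) \<ge> 1}"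
  proof
    fix n assume "n \<in> {n. S (x n) (x n) u \<ge> B}"
    then have "S (x n) (x n) u \<ge> B" by simp
    moreover have "S (x n) (x n) u \<le> S (x n) (x n) (x N) + S (x n) (x n) (x N) + S u u (x N)"
      by (rule tri)
    ultimately show "n \<in> {n. S (x n) (x n) (x N) \<ge> 1}" unfolding B_def by simp
  qed
  ultimately show "\<exists>B>0. natural_density {n. S (x n) (x n) u \<ge> B} 0"
    using density_zero_mono[OF _ N] by blast
qed

end
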